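(* Let $\mathcal H$ and $\mathcal K$ be Hilbert spaces. If $D$ is an nc-domain and $f$ is an $\mathcal L(\mathcal H,\mathcal K)$-valued nc-function on $D$, then there exists a unique $\mathcal L(\mathcal H,\mathcal K)$-valued nc-function $f^\sim$ on the envelope $D^\sim$ such that $f^\sim|_D=f$.
   Context: $\mathcal M^d=\bigcup_n\mathcal M_n^d$. An nc-set is a subset of $\mathcal M^d$ closed under direct sums and unitary conjugation; an nc-domain is an nc-set with each level $D\cap\mathcal M_n^d$ open. A set $A$ is invariant if $S^{-1}(A\cap\mathcal M_n^d)S\subseteq A$ for every $n$ and every invertible $S\in\mathcal M_n$. The envelope $A^\sim$ of $A$ is the smallest invariant nc-set containing $A$. An $\mathcal L(\mathcal H,\mathcal K)$-valued nc-function on a set $D$ closed under direct sums is a map $f$ with $f(x)\in\mathcal L(\mathbb C^n\otimes\mathcal H,\mathbb C^n\otimes\mathcal K)$ for $x\in D\cap\mathcal M_n^d$, $f(x\oplus y)=f(x)\oplus f(y)$, and $f(s^{-1}xs)=(s^{-1}\otimes I_{\mathcal K})f(x)(s\otimes I_{\mathcal H})$ whenever $s$ is invertible and $x,s^{-1}xs\in D$. *)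

theory Defs
  imports "HOL-Analysis.Analysis" "Jordan_Normal_Form.Schur_Decomposition"
begin

class cvec = ab_group_add +
  fixes scaleC :: "complex \<Rightarrow> 'a \<Rightarrow> 'a" (infixr \<open>*\<^sub>C\<close> 75)
  assumes scaleC_add_right: "a *\<^sub>C (x + y) = a *\<^sub>C x + a *\<^sub>C y"
    and scaleC_add_left: "(a + b) *\<^sub>C x = a *\<^sub>C x + b *\<^sub>C x"
    and scaleC_scaleC: "a *\<^sub>C (b *\<^sub>C x) = (a * b) *\<^sub>C x"
    and scaleC_one: "1 *\<^sub>C x = x"

class cinner_space = cvec +
  fixes cinner :: "'a \<Rightarrow> 'a \<Rightarrow> complex"
  assumes cinner_add_left: "cinner (x + y) z = cinner x z + cinner y z"
    and cinner_scaleC_left: "cinner (c *\<^sub>C x) y = c * cinner x y"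
    and cinner_commute: "cinner y x = cnj (cinner x y)"
    and cinner_nonneg: "0 \<le> Re (cinner x x)"
    and cinner_pos: "x \<noteq> 0 \<Longrightarrow> 0 < Re (cinner x x)"

definition cnorm :: "'a::cinner_space \<Rightarrow> real" where
  "cnorm x = sqrt (Re (cinner x x))"

class chilbert = cinner_space +
  assumes chilbert_complete:
    "\<And>X::nat \<Rightarrow> 'a. (\<forall>e>0. \<exists>N::nat. \<forall>m\<ge>N. \<forall>n\<ge>N. sqrt (Re (cinner (X m - X n) (X m - X n))) < e) \<Longrightarrow>
     (\<exists>L. \<forall>e>0. \<exists>N::nat. \<forall>n\<ge>N. sqrt (Re (cinner (X n - L) (X n - L))) < e)"

definition bdd_op :: "('h::chilbert \<Rightarrow> 'k::chilbert) \<Rightarrow> bool" where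
  "bdd_op T \<longleftrightarrow> (\<forall>x y. T (x + y) = T x + T y) \<and> (\<forall>c x. T (c *\<^sub>C x) = c *\<^sub>C T x)
     \<and> (\<exists>M. \<forall>x. cnorm (T x) \<le> M * cnorm x)"

text \<open>A point of \<open>M_n^d\<close> is represented as the pair \<open>(n, [x_1,...,x_d])\<close> with each
  \<open>x_k\<close> an \<open>n \<times> n\<close> complex matrix; \<open>n \<ge> 1\<close>.\<close>
type_synonym ncpt = "nat \<times> complex mat list"

definition ncpts :: "nat \<Rightarrow> ncpt set" where
  "ncpts d = {(n, xs). n \<ge> 1 \<and> length xs = d \<and> (\<forall>A\<in>set xs. A \<in> carrier_mat n n)}"

definition level :: "ncpt set \<Rightarrow> nat \<Rightarrow> ncpt set" where
  "level A n = {x \<in> A. fst x = n}"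

definition diag_sum :: "'a::zero mat \<Rightarrow> 'a mat \<Rightarrow> 'a mat" where
  "diag_sum A B = four_block_mat A (0\<^sub>m (dim_row A) (dim_col B)) (0\<^sub>m (dim_row B) (dim_col A)) B"

definition pt_sum :: "ncpt \<Rightarrow> ncpt \<Rightarrow> ncpt" where
  "pt_sum x y = (fst x + fst y, map2 diag_sum (snd x) (snd y))"

definition pt_conj :: "complex mat \<Rightarrow> ncpt \<Rightarrow> complex mat \<Rightarrow> ncpt" where
  "pt_conj T x S = (fst x, map (\<lambda>A. T * A * S) (snd x))"

definition unitary :: "nat \<Rightarrow> complex mat \<Rightarrow> bool" where
  "unitary n U \<longleftrightarrow> U \<in> carrier_mat n n \<and> mat_adjoint U * U = 1\<^sub>m n"

definition inverse_pair :: "nat \<Rightarrow> complex mat \<Rightarrow> complex mat \<Rightarrow> bool" where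
  "inverse_pair n S Si \<longleftrightarrow> S \<in> carrier_mat n n \<and> Si \<in> carrier_mat n n
     \<and> S * Si = 1\<^sub>m n \<and> Si * S = 1\<^sub>m n"

definition nc_set :: "nat \<Rightarrow> ncpt set \<Rightarrow> bool" where
  "nc_set d A \<longleftrightarrow> A \<subseteq> ncpts d
     \<and> (\<forall>x\<in>A. \<forall>y\<in>A. pt_sum x y \<in> A)
     \<and> (\<forall>x\<in>A. \<forall>U. unitary (fst x) U \<longrightarrow> pt_conj (mat_adjoint U) x U \<in> A)"

text \<open>Each level \<open>D \<inter> M_n^d\<close> is open in \<open>M_n^d \<cong> \<complex>^(d n\<^sup>2)\<close> (entrywise max-norm topology).\<close>
definition nc_domain :: "nat \<Rightarrow> ncpt set \<Rightarrow> bool" where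
  "nc_domain d D \<longleftrightarrow> nc_set d D \<and>
     (\<forall>x\<in>D. \<exists>e>0. \<forall>y\<in>ncpts d. fst y = fst x \<and>
        (\<forall>k<d. \<forall>i<fst x. \<forall>j<fst x. cmod (snd y ! k $$ (i,j) - snd x ! k $$ (i,j)) < e)
        \<longrightarrow> y \<in> D)"

definition invariant :: "ncpt set \<Rightarrow> bool" where
  "invariant A \<longleftrightarrow> (\<forall>x\<in>A. \<forall>S Si. inverse_pair (fst x) S Si \<longrightarrow> pt_conj Si x S \<in> A)"

definition envelope :: "nat \<Rightarrow> ncpt set \<Rightarrow> ncpt set" where
  "envelope d A = \<Inter>{B. nc_set d B \<and> invariant B \<and> A \<subseteq> B}"

text \<open>A value \<open>f(x) \<in> L(\<complex>^n \<otimes> H, \<complex>^n \<otimes> K)\<close> is represented as its \<open>n \<times> n\<close> block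
  operator matrix with entries in \<open>L(H,K)\<close>.\<close>
definition op_val :: "nat \<Rightarrow> ('h::chilbert \<Rightarrow> 'k::chilbert) mat \<Rightarrow> bool" where
  "op_val n F \<longleftrightarrow> F \<in> carrier_mat n n \<and> (\<forall>i<n. \<forall>j<n. bdd_op (F $$ (i,j)))"

definition op_sum :: "('h \<Rightarrow> 'k::zero) mat \<Rightarrow> ('h \<Rightarrow> 'k) mat \<Rightarrow> ('h \<Rightarrow> 'k) mat" where
  "op_sum F G = mat (dim_row F + dim_row G) (dim_col F + dim_col G) (\<lambda>(i,j).
     if i < dim_row F \<and> j < dim_col F then F $$ (i,j)
     else if dim_row F \<le> i \<and> dim_col F \<le> j then G $$ (i - dim_row F, j - dim_col F)
     else (\<lambda>_. 0))"

text \<open>\<open>op_conj T F S = (T \<otimes> I_K) F (S \<otimes> I_H)\<close> for \<open>n\<times>n\<close> scalar matrices \<open>T, S\<close>.\<close>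
definition op_conj :: "complex mat \<Rightarrow> ('h \<Rightarrow> 'k::cvec) mat \<Rightarrow> complex mat \<Rightarrow> ('h \<Rightarrow> 'k) mat" where
  "op_conj T F S = mat (dim_row T) (dim_col S) (\<lambda>(i,j). \<lambda>h.
     \<Sum>k<dim_col T. \<Sum>l<dim_row S. (T $$ (i,k) * S $$ (l,j)) *\<^sub>C (F $$ (k,l)) h)"

definition nc_function :: "nat \<Rightarrow> ncpt set \<Rightarrow> (ncpt \<Rightarrow> ('h::chilbert \<Rightarrow> 'k::chilbert) mat) \<Rightarrow> bool" where
  "nc_function d D f \<longleftrightarrow>
     (\<forall>x\<in>D. op_val (fst x) (f x))
     \<and> (\<forall>x\<in>D. \<forall>y\<in>D. pt_sum x y \<in> D \<longrightarrow> f (pt_sum x y) = op_sum (f x) (f y))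
     \<and> (\<forall>x\<in>D. \<forall>S Si. inverse_pair (fst x) S Si \<and> pt_conj Si x S \<in> D \<longrightarrow>
           f (pt_conj Si x S) = op_conj Si (f x) S)"

end

theory Submission
  imports Defs
begin


lemma scaleC_zero_right[simp]: "(a::complex) *\<^sub>C (0::'a::cvec) = 0"
proof -
  have "a *\<^sub>C (0::'a) = a *\<^sub>C 0 + a *\<^sub>C 0" using scaleC_add_right[of a "0::'a" 0] by simp
  thus ?thesis by simp
qed

lemma scaleC_zero_left[simp]: "(0::complex) *\<^sub>C (x::'a::cvec) = 0"
proof -
  have "(0::complex) *\<^sub>C x = 0 *\<^sub>C x + 0 *\<^sub>C x" using scaleC_add_left[of 0 0 x] by simp
  thus ?thesis by simp
qed

lemma scaleC_sum_right: "(a::complex) *\<^sub>C sum f A = (\<Sum>i\<in>A. a *\<^sub>C (f i :: 'a::cvec))"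
  by (induction A rule: infinite_finite_induct) (auto simp: scaleC_add_right)

lemma scaleC_sum_left: "sum g A *\<^sub>C (x::'a::cvec) = (\<Sum>i\<in>A. g i *\<^sub>C x)"
  by (induction A rule: infinite_finite_induct) (auto simp: scaleC_add_left)

lemma scaleC_minus_right: "(a::complex) *\<^sub>C (- x) = - (a *\<^sub>C (x::'a::cvec))"
proof -
  have "a *\<^sub>C (- x) + a *\<^sub>C x = 0" by (simp flip: scaleC_add_right)
  thus ?thesis by (simp add: eq_neg_iff_add_eq_0)
qed

lemma scaleC_diff_right: "(a::complex) *\<^sub>C (x - y) = a *\<^sub>C x - a *\<^sub>C (y::'a::cvec)"
  unfolding diff_conv_add_uminus scaleC_add_right scaleC_minus_right by (rule refl)

lemma scaleC_minus_left: "(- a) *\<^sub>C x = - (a *\<^sub>C (x::'a::cvec))"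
proof -
  have "(- a) *\<^sub>C x + a *\<^sub>C x = 0" by (simp flip: scaleC_add_left)
  thus ?thesis by (simp add: eq_neg_iff_add_eq_0)
qed

lemma cinner_add_right: "cinner (x::'a::cinner_space) (y + z) = cinner x y + cinner x z"
proof -
  have "cinner x (y + z) = cnj (cinner (y+z) x)" by (rule cinner_commute)
  also have "\<dots> = cnj (cinner y x) + cnj (cinner z x)" by (simp add: cinner_add_left)
  also have "\<dots> = cinner x y + cinner x z" using cinner_commute[of x y] cinner_commute[of x z] by simp
  finally show ?thesis .
qed

lemma cinner_scaleC_right: "cinner (x::'a::cinner_space) (c *\<^sub>C y) = cnj c * cinner x y"
proof -
  have "cinner x (c *\<^sub>C y) = cnj (cinner (c *\<^sub>C y) x)" by (rule cinner_commute)
  also have "\<dots> = cnj c * cnj (cinner y x)" by (simp add: cinner_scaleC_left)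
  also have "\<dots> = cnj c * cinner x y" using cinner_commute[of x y] by simp
  finally show ?thesis .
qed

lemma cinner_zero_left[simp]: "cinner (0::'a::cinner_space) y = 0"
  using cinner_scaleC_left[of 0 "0::'a" y] by simp

lemma cinner_zero_right[simp]: "cinner (x::'a::cinner_space) 0 = 0"
  using cinner_scaleC_right[of x 0 "0::'a"] by simp

lemma cinner_minus_left: "cinner (- x::'a::cinner_space) y = - cinner x y"
proof -
  have "cinner (- x) y + cinner x y = 0" by (simp flip: cinner_add_left)
  thus ?thesis by (simp add: eq_neg_iff_add_eq_0)
qed

lemma cinner_minus_right: "cinner (x::'a::cinner_space) (- y) = - cinner x y"
proof -
  have "cinner x (- y) + cinner x y = 0" by (simp flip: cinner_add_right)
  thus ?thesis by (simp add: eq_neg_iff_add_eq_0)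
qed

lemma cinner_self_real: "Im (cinner (x::'a::cinner_space) x) = 0"
proof -
  have "cinner x x = cnj (cinner x x)" by (rule cinner_commute)
  hence "Im (cinner x x) = - Im (cinner x x)" by (metis cnj.sel(2))
  thus ?thesis by simp
qed

lemma re_cinner_sym: "Re (cinner (y::'a::cinner_space) x) = Re (cinner x y)"
  by (subst cinner_commute) simp

lemma cinner_real_scale: "Re (cinner (x - complex_of_real s *\<^sub>C y) (x - complex_of_real s *\<^sub>C (y::'a::cinner_space)))
   = Re (cinner x x) - 2 * s * Re (cinner x y) + s^2 * Re (cinner y y)"
proof -
  define v where "v = complex_of_real s *\<^sub>C y"
  have e: "cinner (x - v) (x - v) = cinner x x - cinner x v - (cinner v x - cinner v v)"
    by (simp only: diff_conv_add_uminus cinner_add_left cinner_add_right cinner_minus_left cinner_minus_right) (simp add: algebra_simps)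
  have "cinner x v = complex_of_real s * cinner x y" by (simp add: v_def cinner_scaleC_right)
  moreover have "cinner v x = complex_of_real s * cinner y x" by (simp add: v_def cinner_scaleC_left)
  moreover have "cinner v v = complex_of_real (s * s) * cinner y y" by (simp add: v_def cinner_scaleC_left cinner_scaleC_right)
  ultimately have "Re (cinner (x - v) (x - v)) = Re (cinner x x) - s * Re (cinner x y) - s * Re (cinner y x) + s * s * Re (cinner y y)"
    using e by simp
  thus ?thesis unfolding v_def using re_cinner_sym[of y x] by (simp add: power2_eq_square)
qed

lemma cauchy_re: "Re (cinner (x::'a::cinner_space) y) \<le> cnorm x * cnorm y"
proof (cases "y = 0")
  case True thus ?thesis by (simp add: cnorm_def)
next
  case False
  define a where "a = Re (cinner x x)"
  define b where "b = Re (cinner y y)"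
  define r where "r = Re (cinner x y)"
  have b: "b > 0" using cinner_pos[OF False] b_def by simp
  have a: "a \<ge> 0" using cinner_nonneg a_def by simp
  have "0 \<le> a - 2 * (r/b) * r + (r/b)^2 * b"
    using cinner_real_scale[of x "r/b" y] cinner_nonneg[of "x - complex_of_real (r/b) *\<^sub>C y"]
    unfolding a_def b_def r_def by simp
  hence "0 \<le> a - r^2 / b" using b by (simp add: power2_eq_square field_simps)
  hence "r^2 \<le> a * b" using b by (simp add: field_simps)
  hence "r \<le> sqrt (a * b)" by (metis real_le_rsqrt)
  thus ?thesis unfolding cnorm_def a_def b_def r_def by (simp add: real_sqrt_mult)
qed

lemma cnorm_nonneg: "cnorm x \<ge> 0" by (simp add: cnorm_def cinner_nonneg)

lemma cnorm_triangle: "cnorm ((x::'a::cinner_space) + y) \<le> cnorm x + cnorm y"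
proof -
  have "Re (cinner (x+y) (x+y)) = Re (cinner x x) + 2 * Re (cinner x y) + Re (cinner y y)"
    by (simp add: cinner_add_left cinner_add_right re_cinner_sym[of y x])
  also have "\<dots> \<le> (cnorm x)^2 + 2 * (cnorm x * cnorm y) + (cnorm y)^2"
    using cauchy_re[of x y] cinner_nonneg[of x] cinner_nonneg[of y] by (simp add: cnorm_def)
  also have "\<dots> = (cnorm x + cnorm y)^2" by (simp add: power2_eq_square algebra_simps)
  finally have "(cnorm (x+y))^2 \<le> (cnorm x + cnorm y)^2"
    using cinner_nonneg[of "x+y"] by (simp add: cnorm_def)
  thus ?thesis using cnorm_nonneg[of x] cnorm_nonneg[of y] by (meson power2_le_imp_le add_nonneg_nonneg)
qed

lemma cnorm_scale: "cnorm (c *\<^sub>C (x::'a::cinner_space)) = cmod c * cnorm x"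
proof -
  have "cinner (c *\<^sub>C x) (c *\<^sub>C x) = (c * cnj c) * cinner x x"
    by (simp add: cinner_scaleC_left cinner_scaleC_right)
  also have "c * cnj c = complex_of_real ((cmod c)^2)" by (rule complex_norm_square[symmetric])
  finally have "Re (cinner (c *\<^sub>C x) (c *\<^sub>C x)) = (cmod c)^2 * Re (cinner x x)" by simp
  thus ?thesis by (simp add: cnorm_def real_sqrt_mult)
qed

lemma cnorm_zero[simp]: "cnorm (0::'a::cinner_space) = 0" by (simp add: cnorm_def)

lemma bdd_op_zero: "bdd_op (\<lambda>h. 0::'k::chilbert)"
  unfolding bdd_op_def by (auto intro: exI[of _ 0])

lemma bdd_op_add: assumes "bdd_op F" "bdd_op G" shows "bdd_op (\<lambda>h. F h + G h)"
proof -
  from assms obtain M N where M: "\<And>x. cnorm (F x) \<le> M * cnorm x" and N: "\<And>x. cnorm (G x) \<le> N * cnorm x"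
    unfolding bdd_op_def by blast
  have "cnorm (F x + G x) \<le> (M + N) * cnorm x" for x
    using cnorm_triangle[of "F x" "G x"] M[of x] N[of x] by (simp add: algebra_simps)
  hence "\<exists>K. \<forall>x. cnorm (F x + G x) \<le> K * cnorm x" by blast
  moreover have "\<forall>x y. F (x + y) + G (x + y) = F x + G x + (F y + G y)"
    using assms unfolding bdd_op_def by (simp add: algebra_simps)
  moreover have "\<forall>c x. F (c *\<^sub>C x) + G (c *\<^sub>C x) = c *\<^sub>C (F x + G x)"
    using assms unfolding bdd_op_def by (simp add: scaleC_add_right)
  ultimately show ?thesis unfolding bdd_op_def by blast
qed

lemma bdd_op_scale: assumes "bdd_op F" shows "bdd_op (\<lambda>h. c *\<^sub>C F h)"
proof -
  from assms obtain M where M: "\<And>x. cnorm (F x) \<le> M * cnorm x"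
    unfolding bdd_op_def by blast
  have "cnorm (c *\<^sub>C F x) \<le> (cmod c * M) * cnorm x" for x
    using M[of x] by (simp add: cnorm_scale) (simp add: mult.assoc mult_left_mono)
  hence "\<exists>K. \<forall>x. cnorm (c *\<^sub>C F x) \<le> K * cnorm x" by blast
  moreover have "\<forall>x y. c *\<^sub>C F (x + y) = c *\<^sub>C F x + c *\<^sub>C F y"
    using assms unfolding bdd_op_def by (simp add: scaleC_add_right)
  moreover have "\<forall>a x. c *\<^sub>C F (a *\<^sub>C x) = a *\<^sub>C (c *\<^sub>C F x)"
    using assms unfolding bdd_op_def by (simp add: scaleC_scaleC mult.commute)
  ultimately show ?thesis unfolding bdd_op_def by blast
qed

lemma bdd_op_sum: assumes "\<And>i. i \<in> A \<Longrightarrow> bdd_op (G i)" shows "bdd_op (\<lambda>h. \<Sum>i\<in>A. G i h)"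
  using assms
proof (cases "finite A")
  case True thus ?thesis using assms
  proof (induction A rule: finite_induct)
    case empty thus ?case by (simp add: bdd_op_zero)
  next
    case (insert a A)
    have "bdd_op (\<lambda>h. G a h + (\<Sum>i\<in>A. G i h))"
      by (rule bdd_op_add) (use insert in auto)
    thus ?case using insert by simp
  qed
next
  case False thus ?thesis by (simp add: bdd_op_zero)
qed




lemma sum4_swap:
  "(\<Sum>k\<in>A. \<Sum>l\<in>B. \<Sum>k'\<in>C. \<Sum>l'\<in>E. f k l k' l') = (\<Sum>k'\<in>C. \<Sum>l'\<in>E. \<Sum>k\<in>A. \<Sum>l\<in>B. f k l k' l')"
proof -
  have "(\<Sum>k\<in>A. \<Sum>l\<in>B. \<Sum>k'\<in>C. \<Sum>l'\<in>E. f k l k' l') = (\<Sum>k\<in>A. \<Sum>k'\<in>C. \<Sum>l\<in>B. \<Sum>l'\<in>E. f k l k' l')"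
    by (rule sum.cong[OF refl], rule sum.swap)
  also have "\<dots> = (\<Sum>k'\<in>C. \<Sum>k\<in>A. \<Sum>l\<in>B. \<Sum>l'\<in>E. f k l k' l')" by (rule sum.swap)
  also have "\<dots> = (\<Sum>k'\<in>C. \<Sum>k\<in>A. \<Sum>l'\<in>E. \<Sum>l\<in>B. f k l k' l')"
    by (intro sum.cong[OF refl], rule sum.swap)
  also have "\<dots> = (\<Sum>k'\<in>C. \<Sum>l'\<in>E. \<Sum>k\<in>A. \<Sum>l\<in>B. f k l k' l')"
    by (rule sum.cong[OF refl], rule sum.swap)
  finally show ?thesis .
qed

lemma mult_entry: "A \<in> carrier_mat n n \<Longrightarrow> B \<in> carrier_mat n n \<Longrightarrow> i < n \<Longrightarrow> j < n \<Longrightarrow>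
  (A * B) $$ (i,j) = (\<Sum>k<n. A $$ (i,k) * B $$ (k,j))"
  by (auto simp: scalar_prod_def lessThan_atLeast0 intro!: sum.cong)

lemma op_conj_dims[simp]: "dim_row (op_conj T F S) = dim_row T" "dim_col (op_conj T F S) = dim_col S"
  by (auto simp: op_conj_def)

lemma op_conj_index: "i < dim_row T \<Longrightarrow> j < dim_col S \<Longrightarrow> op_conj T F S $$ (i,j) = (\<lambda>h.
     \<Sum>k<dim_col T. \<Sum>l<dim_row S. (T $$ (i,k) * S $$ (l,j)) *\<^sub>C (F $$ (k,l)) h)"
  by (simp add: op_conj_def)

lemma op_conj_assoc:
  assumes A: "A \<in> carrier_mat n n" and B: "B \<in> carrier_mat n n" and C: "C \<in> carrier_mat n n" and D: "D \<in> carrier_mat n n"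
  shows "op_conj A (op_conj B F C) D = op_conj (A * B) F (C * D)"
proof (rule eq_matI)
  show "dim_row (op_conj A (op_conj B F C) D) = dim_row (op_conj (A * B) F (C * D))" using A by simp
  show "dim_col (op_conj A (op_conj B F C) D) = dim_col (op_conj (A * B) F (C * D))" using D C by simp
  fix i j assume "i < dim_row (op_conj (A * B) F (C * D))" "j < dim_col (op_conj (A * B) F (C * D))"
  hence i: "i < n" and j: "j < n" using A C D by auto
  show "op_conj A (op_conj B F C) D $$ (i, j) = op_conj (A * B) F (C * D) $$ (i, j)"
  proof (rule ext)
    fix h
    have "(op_conj A (op_conj B F C) D $$ (i, j)) h =
      (\<Sum>k<n. \<Sum>l<n. (A $$ (i,k) * D $$ (l,j)) *\<^sub>C (\<Sum>k'<n. \<Sum>l'<n. (B $$ (k,k') * C $$ (l',l)) *\<^sub>C (F $$ (k',l')) h))"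
      using A B C D i j by (simp add: op_conj_index)
    also have "\<dots> = (\<Sum>k<n. \<Sum>l<n. \<Sum>k'<n. \<Sum>l'<n. ((A $$ (i,k) * D $$ (l,j)) * (B $$ (k,k') * C $$ (l',l))) *\<^sub>C (F $$ (k',l')) h)"
      by (simp add: scaleC_sum_right scaleC_scaleC)
    also have "\<dots> = (\<Sum>k'<n. \<Sum>l'<n. \<Sum>k<n. \<Sum>l<n. ((A $$ (i,k) * D $$ (l,j)) * (B $$ (k,k') * C $$ (l',l))) *\<^sub>C (F $$ (k',l')) h)"
      by (rule sum4_swap)
    also have "\<dots> = (\<Sum>k'<n. \<Sum>l'<n. ((A * B) $$ (i,k') * (C * D) $$ (l',j)) *\<^sub>C (F $$ (k',l')) h)"
    proof (intro sum.cong refl)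
      fix k' l' assume k': "k' \<in> {..<n}" and l': "l' \<in> {..<n}"
      have "(A * B) $$ (i,k') * (C * D) $$ (l',j) = (\<Sum>k<n. A $$ (i,k) * B $$ (k,k')) * (\<Sum>l<n. C $$ (l',l) * D $$ (l,j))"
        using k' l' mult_entry[OF A B i, of k'] mult_entry[OF C D _ j, of l'] by simp
      also have "\<dots> = (\<Sum>k<n. \<Sum>l<n. (A $$ (i,k) * D $$ (l,j)) * (B $$ (k,k') * C $$ (l',l)))"
        by (simp add: sum_product algebra_simps)
      finally show "(\<Sum>k<n. \<Sum>l<n. ((A $$ (i,k) * D $$ (l,j)) * (B $$ (k,k') * C $$ (l',l))) *\<^sub>C (F $$ (k',l')) h)
         = ((A * B) $$ (i,k') * (C * D) $$ (l',j)) *\<^sub>C (F $$ (k',l')) h"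
        by (simp add: scaleC_sum_left)
    qed
    also have "\<dots> = (op_conj (A * B) F (C * D) $$ (i, j)) h"
      using A B C D i j by (simp add: op_conj_index)
    finally show "(op_conj A (op_conj B F C) D $$ (i, j)) h = (op_conj (A * B) F (C * D) $$ (i, j)) h" .
  qed
qed


lemma mat_assoc5: assumes "A \<in> carrier_mat n n" "B \<in> carrier_mat n n" "C \<in> carrier_mat n n" "D \<in> carrier_mat n n" "X \<in> carrier_mat n n"
  shows "A * (B * X * C) * D = A * B * X * (C * D)"
proof -
  have BX: "B * X \<in> carrier_mat n n" using assms by simp
  have AB: "A * B \<in> carrier_mat n n" using assms by simp
  have BXC: "B * X * C \<in> carrier_mat n n" using assms by simp
  have ABX: "A * B * X \<in> carrier_mat n n" using assms by simp
  have "A * (B * X * C) * D = A * (B * X * C * D)" by (rule assoc_mult_mat[OF assms(1) BXC assms(4)])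
  also have "B * X * C * D = B * X * (C * D)" by (rule assoc_mult_mat[OF BX assms(3) assms(4)])
  also have "A * (B * X * (C * D)) = A * (B * X) * (C * D)"
    using assoc_mult_mat[OF assms(1) BX mult_carrier_mat[OF assms(3) assms(4)]] by simp
  also have "A * (B * X) = A * B * X" using assoc_mult_mat[OF assms(1) assms(2) assms(5)] by simp
  finally show ?thesis .
qed

lemma mat_assoc4: assumes "A \<in> carrier_mat n n" "B \<in> carrier_mat n n" "C \<in> carrier_mat n n" "D \<in> carrier_mat n n"
  shows "A * B * (C * D) = A * (B * C) * D"
proof -
  have "A * B * (C * D) = A * (B * (C * D))" by (rule assoc_mult_mat[OF assms(1,2) mult_carrier_mat[OF assms(3,4)]])
  also have "B * (C * D) = B * C * D" by (rule assoc_mult_mat[OF assms(2,3,4), symmetric])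
  also have "A * (B * C * D) = A * (B * C) * D" by (rule assoc_mult_mat[OF assms(1) mult_carrier_mat[OF assms(2,3)] assms(4), symmetric])
  finally show ?thesis .
qed

lemma ncptsD: "x \<in> ncpts d \<Longrightarrow> fst x \<ge> 1 \<and> length (snd x) = d \<and> (\<forall>A\<in>set (snd x). A \<in> carrier_mat (fst x) (fst x))"
  by (auto simp: ncpts_def)

lemma ncptsI: "fst x \<ge> 1 \<Longrightarrow> length (snd x) = d \<Longrightarrow> (\<forall>A\<in>set (snd x). A \<in> carrier_mat (fst x) (fst x)) \<Longrightarrow> x \<in> ncpts d"
  by (cases x) (auto simp: ncpts_def)

lemma pt_conj_fst[simp]: "fst (pt_conj T x S) = fst x" by (simp add: pt_conj_def)

lemma pt_conj_ncpts: assumes "x \<in> ncpts d" "T \<in> carrier_mat (fst x) (fst x)" "S \<in> carrier_mat (fst x) (fst x)"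
  shows "pt_conj T x S \<in> ncpts d"
  using assms by (intro ncptsI) (auto simp: pt_conj_def ncpts_def)

lemma pt_conj_assoc:
  assumes x: "x \<in> ncpts d" and A: "A \<in> carrier_mat (fst x) (fst x)" and B: "B \<in> carrier_mat (fst x) (fst x)"
    and C: "C \<in> carrier_mat (fst x) (fst x)" and D: "D \<in> carrier_mat (fst x) (fst x)"
  shows "pt_conj A (pt_conj B x C) D = pt_conj (A * B) x (C * D)"
proof -
  have "A * (B * X * C) * D = A * B * X * (C * D)" if X: "X \<in> carrier_mat (fst x) (fst x)" for X
    using A B C D X by (rule mat_assoc5)
  thus ?thesis using ncptsD[OF x] by (auto simp: pt_conj_def)
qed

lemma pt_conj_one: assumes x: "x \<in> ncpts d" shows "pt_conj (1\<^sub>m (fst x)) x (1\<^sub>m (fst x)) = x"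
proof -
  have "map (\<lambda>A. 1\<^sub>m (fst x) * A * 1\<^sub>m (fst x)) (snd x) = snd x"
    using ncptsD[OF x] by (intro map_idI) auto
  thus ?thesis by (cases x) (simp add: pt_conj_def)
qed

lemma inverse_pair_one: "inverse_pair n (1\<^sub>m n) (1\<^sub>m n)" by (simp add: inverse_pair_def)

lemma inverse_pair_comp: assumes "inverse_pair n S Si" "inverse_pair n T Ti"
  shows "inverse_pair n (S * T) (Ti * Si)"
proof -
  have c: "S \<in> carrier_mat n n" "Si \<in> carrier_mat n n" "T \<in> carrier_mat n n" "Ti \<in> carrier_mat n n"
    and e: "S * Si = 1\<^sub>m n" "Si * S = 1\<^sub>m n" "T * Ti = 1\<^sub>m n" "Ti * T = 1\<^sub>m n"
    using assms by (auto simp: inverse_pair_def)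
  have "S * T * (Ti * Si) = S * (T * Ti) * Si" by (rule mat_assoc4) (use c in auto)
  also have "\<dots> = 1\<^sub>m n" using c e by simp
  finally have 1: "S * T * (Ti * Si) = 1\<^sub>m n" .
  have "Ti * Si * (S * T) = Ti * (Si * S) * T" by (rule mat_assoc4) (use c in auto)
  also have "\<dots> = 1\<^sub>m n" using c e by simp
  finally have 2: "Ti * Si * (S * T) = 1\<^sub>m n" .
  show ?thesis using c 1 2 by (simp add: inverse_pair_def)
qed

lemma inverse_pair_sym: "inverse_pair n S Si \<Longrightarrow> inverse_pair n Si S"
  by (auto simp: inverse_pair_def)

lemma mat_adjoint_carrier: "U \<in> carrier_mat n n \<Longrightarrow> mat_adjoint U \<in> carrier_mat n n"
proof -
  assume U: "U \<in> carrier_mat n n"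
  have "length (map conjugate (cols U)) = n" using U by simp
  thus ?thesis using mat_of_rows_carrier(1)[of "dim_row U" "map conjugate (cols U)"] U
    unfolding mat_adjoint_def by simp
qed

lemma unitary_inverse_pair: assumes "unitary n U" shows "inverse_pair n U (mat_adjoint U)"
proof -
  have U: "U \<in> carrier_mat n n" and e: "mat_adjoint U * U = 1\<^sub>m n" using assms by (auto simp: unitary_def)
  have Ua: "mat_adjoint U \<in> carrier_mat n n" using mat_adjoint_carrier[OF U] .
  have "U * mat_adjoint U = 1\<^sub>m n" by (rule mat_mult_left_right_inverse[OF Ua U e])
  thus ?thesis using U Ua e by (simp add: inverse_pair_def)
qed


lemma diag_sum_carrier: "A \<in> carrier_mat n1 n1 \<Longrightarrow> B \<in> carrier_mat n2 n2 \<Longrightarrow> diag_sum A B \<in> carrier_mat (n1+n2) (n1+n2)"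
  unfolding diag_sum_def by simp

lemma diag_sum_mult:
  assumes A: "A \<in> carrier_mat n1 n1" and C: "C \<in> carrier_mat n1 n1" and B: "B \<in> carrier_mat n2 n2" and D: "D \<in> carrier_mat n2 n2"
  shows "diag_sum A B * diag_sum C D = diag_sum (A * C) (B * D)"
proof -
  have e1: "diag_sum A B = four_block_mat A (0\<^sub>m n1 n2) (0\<^sub>m n2 n1) B" using A B by (simp add: diag_sum_def)
  have e2: "diag_sum C D = four_block_mat C (0\<^sub>m n1 n2) (0\<^sub>m n2 n1) D" using C D by (simp add: diag_sum_def)
  have "diag_sum A B * diag_sum C D = four_block_mat (A * C + 0\<^sub>m n1 n2 * 0\<^sub>m n2 n1) (A * 0\<^sub>m n1 n2 + 0\<^sub>m n1 n2 * D)
    (0\<^sub>m n2 n1 * C + B * 0\<^sub>m n2 n1) (0\<^sub>m n2 n1 * 0\<^sub>m n1 n2 + B * D)"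
    unfolding e1 e2 by (rule mult_four_block_mat[OF A zero_carrier_mat zero_carrier_mat B C zero_carrier_mat zero_carrier_mat D])
  also have "\<dots> = diag_sum (A * C) (B * D)"
    unfolding diag_sum_def using A B C D by simp
  finally show ?thesis .
qed

lemma diag_sum_one: "diag_sum (1\<^sub>m n1) (1\<^sub>m n2) = 1\<^sub>m (n1 + n2)"
  unfolding diag_sum_def by simp

lemma inverse_pair_diag: assumes "inverse_pair n1 S1 Si1" "inverse_pair n2 S2 Si2"
  shows "inverse_pair (n1+n2) (diag_sum S1 S2) (diag_sum Si1 Si2)"
proof -
  have c: "S1 \<in> carrier_mat n1 n1" "Si1 \<in> carrier_mat n1 n1" "S2 \<in> carrier_mat n2 n2" "Si2 \<in> carrier_mat n2 n2"
    and e: "S1 * Si1 = 1\<^sub>m n1" "Si1 * S1 = 1\<^sub>m n1" "S2 * Si2 = 1\<^sub>m n2" "Si2 * S2 = 1\<^sub>m n2"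
    using assms by (auto simp: inverse_pair_def)
  show ?thesis unfolding inverse_pair_def
    using c diag_sum_carrier[OF c(1,3)] diag_sum_carrier[OF c(2,4)]
      diag_sum_mult[OF c(1,2,3,4)] diag_sum_mult[OF c(2,1,4,3)] e diag_sum_one by simp
qed

lemma pt_sum_fst[simp]: "fst (pt_sum x y) = fst x + fst y" by (simp add: pt_sum_def)

lemma pt_sum_ncpts: assumes "x \<in> ncpts d" "y \<in> ncpts d" shows "pt_sum x y \<in> ncpts d"
proof (rule ncptsI)
  show "1 \<le> fst (pt_sum x y)" using ncptsD[OF assms(1)] by simp
  show "length (snd (pt_sum x y)) = d" using ncptsD[OF assms(1)] ncptsD[OF assms(2)] by (simp add: pt_sum_def)
  show "\<forall>A\<in>set (snd (pt_sum x y)). A \<in> carrier_mat (fst (pt_sum x y)) (fst (pt_sum x y))"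
  proof
    fix A assume "A \<in> set (snd (pt_sum x y))"
    then obtain i where i: "i < length (snd (pt_sum x y))" and A: "A = snd (pt_sum x y) ! i" by (metis in_set_conv_nth)
    have ix: "i < length (snd x)" and iy: "i < length (snd y)" using i by (auto simp: pt_sum_def)
    have "A = diag_sum (snd x ! i) (snd y ! i)" using A ix iy by (simp add: pt_sum_def)
    moreover have "snd x ! i \<in> carrier_mat (fst x) (fst x)" using ncptsD[OF assms(1)] ix by (meson nth_mem)
    moreover have "snd y ! i \<in> carrier_mat (fst y) (fst y)" using ncptsD[OF assms(2)] iy by (meson nth_mem)
    ultimately show "A \<in> carrier_mat (fst (pt_sum x y)) (fst (pt_sum x y))" by (simp add: diag_sum_carrier)
  qed
qed

lemma pt_sum_conj:
  assumes x1: "x1 \<in> ncpts d" and x2: "x2 \<in> ncpts d"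
    and A1: "A1 \<in> carrier_mat (fst x1) (fst x1)" and B1: "B1 \<in> carrier_mat (fst x1) (fst x1)"
    and A2: "A2 \<in> carrier_mat (fst x2) (fst x2)" and B2: "B2 \<in> carrier_mat (fst x2) (fst x2)"
  shows "pt_sum (pt_conj A1 x1 B1) (pt_conj A2 x2 B2) = pt_conj (diag_sum A1 A2) (pt_sum x1 x2) (diag_sum B1 B2)"
proof -
  have l1: "length (snd x1) = d" and l2: "length (snd x2) = d" using ncptsD[OF x1] ncptsD[OF x2] by auto
  have "map2 diag_sum (map (\<lambda>A. A1 * A * B1) (snd x1)) (map (\<lambda>A. A2 * A * B2) (snd x2))
     = map (\<lambda>A. diag_sum A1 A2 * A * diag_sum B1 B2) (map2 diag_sum (snd x1) (snd x2))"
  proof (rule nth_equalityI)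
    show "length (map2 diag_sum (map (\<lambda>A. A1 * A * B1) (snd x1)) (map (\<lambda>A. A2 * A * B2) (snd x2))) =
      length (map (\<lambda>A. diag_sum A1 A2 * A * diag_sum B1 B2) (map2 diag_sum (snd x1) (snd x2)))" by simp
    fix i assume "i < length (map2 diag_sum (map (\<lambda>A. A1 * A * B1) (snd x1)) (map (\<lambda>A. A2 * A * B2) (snd x2)))"
    hence i1: "i < length (snd x1)" and i2: "i < length (snd x2)" by auto
    have X1: "snd x1 ! i \<in> carrier_mat (fst x1) (fst x1)" using ncptsD[OF x1] i1 by (meson nth_mem)
    have X2: "snd x2 ! i \<in> carrier_mat (fst x2) (fst x2)" using ncptsD[OF x2] i2 by (meson nth_mem)
    have "diag_sum A1 A2 * diag_sum (snd x1 ! i) (snd x2 ! i) * diag_sum B1 B2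
       = diag_sum (A1 * snd x1 ! i * B1) (A2 * snd x2 ! i * B2)"
      by (simp only: diag_sum_mult[OF A1 X1 A2 X2] diag_sum_mult[OF mult_carrier_mat[OF A1 X1] B1 mult_carrier_mat[OF A2 X2] B2])
    thus "map2 diag_sum (map (\<lambda>A. A1 * A * B1) (snd x1)) (map (\<lambda>A. A2 * A * B2) (snd x2)) ! i =
         map (\<lambda>A. diag_sum A1 A2 * A * diag_sum B1 B2) (map2 diag_sum (snd x1) (snd x2)) ! i"
      using i1 i2 by simp
  qed
  thus ?thesis by (simp add: pt_sum_def pt_conj_def)
qed




definition blk :: "nat \<Rightarrow> (nat \<Rightarrow> nat \<Rightarrow> 'a) \<Rightarrow> (nat \<Rightarrow> nat \<Rightarrow> 'a) \<Rightarrow> 'a \<Rightarrow> nat \<Rightarrow> nat \<Rightarrow> 'a" where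
  "blk n1 P Q z i k = (if i < n1 \<and> k < n1 then P i k else if n1 \<le> i \<and> n1 \<le> k then Q (i - n1) (k - n1) else z)"

lemma sum_split_nat: "(\<Sum>k<(n1::nat)+n2. g k) = (\<Sum>k<n1. g k) + (\<Sum>k<n2. g (n1+k))"
  by (induction n2) (simp_all add: add.assoc)

lemma block_sum:
  fixes pa qa pb qb :: "nat \<Rightarrow> nat \<Rightarrow> complex" and pf qf :: "nat \<Rightarrow> nat \<Rightarrow> 'k::cvec"
  shows "(\<Sum>k<n1+n2. \<Sum>l<n1+n2. (blk n1 pa qa 0 i k * blk n1 pb qb 0 l j) *\<^sub>C blk n1 pf qf 0 k l) =
   blk n1 (\<lambda>i j. \<Sum>k<n1. \<Sum>l<n1. (pa i k * pb l j) *\<^sub>C pf k l) (\<lambda>i j. \<Sum>k<n2. \<Sum>l<n2. (qa i k * qb l j) *\<^sub>C qf k l) 0 i j"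
proof -
  define T where "T k l = (blk n1 pa qa 0 i k * blk n1 pb qb 0 l j) *\<^sub>C blk n1 pf qf 0 k l" for k l
  define c1 where "c1 = (i < n1 \<and> j < n1)"
  define c2 where "c2 = (n1 \<le> i \<and> n1 \<le> j)"
  have "(\<Sum>k<n1+n2. \<Sum>l<n1+n2. T k l) = (\<Sum>k<n1+n2. (\<Sum>l<n1. T k l) + (\<Sum>l<n2. T k (n1+l)))"
    by (simp add: sum_split_nat)
  also have "\<dots> = (\<Sum>k<n1. \<Sum>l<n1. T k l) + (\<Sum>k<n1. \<Sum>l<n2. T k (n1+l))
      + ((\<Sum>k<n2. \<Sum>l<n1. T (n1+k) l) + (\<Sum>k<n2. \<Sum>l<n2. T (n1+k) (n1+l)))"
    by (simp add: sum_split_nat sum.distrib)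
  also have "(\<Sum>k<n1. \<Sum>l<n2. T k (n1+l)) = 0"
    by (intro sum.neutral ballI) (simp add: T_def blk_def)
  also have "(\<Sum>k<n2. \<Sum>l<n1. T (n1+k) l) = 0"
    by (intro sum.neutral ballI) (simp add: T_def blk_def)
  also have "(\<Sum>k<n1. \<Sum>l<n1. T k l) = (\<Sum>k<n1. \<Sum>l<n1. if c1 then (pa i k * pb l j) *\<^sub>C pf k l else 0)"
    by (intro sum.cong refl) (auto simp: T_def blk_def c1_def)
  also have "\<dots> = (if c1 then (\<Sum>k<n1. \<Sum>l<n1. (pa i k * pb l j) *\<^sub>C pf k l) else 0)"
    by simp
  also have "(\<Sum>k<n2. \<Sum>l<n2. T (n1+k) (n1+l)) = (\<Sum>k<n2. \<Sum>l<n2. if c2 then (qa (i-n1) k * qb l (j-n1)) *\<^sub>C qf k l else 0)"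
    by (intro sum.cong refl) (auto simp: T_def blk_def c2_def)
  also have "\<dots> = (if c2 then (\<Sum>k<n2. \<Sum>l<n2. (qa (i-n1) k * qb l (j-n1)) *\<^sub>C qf k l) else 0)"
    by simp
  finally show ?thesis unfolding T_def by (auto simp: blk_def c1_def c2_def)
qed

lemma blk_diag: assumes "A1 \<in> carrier_mat n1 n1" "A2 \<in> carrier_mat n2 n2" "i < n1 + n2" "k < n1 + n2"
  shows "diag_sum A1 A2 $$ (i,k) = blk n1 (\<lambda>i k. A1 $$ (i,k)) (\<lambda>i k. A2 $$ (i,k)) 0 i k"
  using assms by (auto simp: diag_sum_def blk_def)

lemma blk_op_sum: assumes "F1 \<in> carrier_mat n1 n1" "F2 \<in> carrier_mat n2 n2" "i < n1 + n2" "k < n1 + n2"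
  shows "(op_sum F1 F2 $$ (i,k)) h = blk n1 (\<lambda>i k. (F1 $$ (i,k)) h) (\<lambda>i k. (F2 $$ (i,k)) h) 0 i k"
  using assms by (auto simp: op_sum_def blk_def)

lemma op_sum_dims[simp]: "dim_row (op_sum F G) = dim_row F + dim_row G" "dim_col (op_sum F G) = dim_col F + dim_col G"
  by (auto simp: op_sum_def)

lemma op_conj_carrier: "T \<in> carrier_mat n n \<Longrightarrow> S \<in> carrier_mat n n \<Longrightarrow> op_conj T F S \<in> carrier_mat n n"
proof -
  assume T: "T \<in> carrier_mat n n" and S: "S \<in> carrier_mat n n"
  have "dim_row T = n" "dim_col S = n" using T S by auto
  thus ?thesis unfolding op_conj_def by (metis mat_carrier)
qed

lemma op_conj_entry: "T \<in> carrier_mat n n \<Longrightarrow> S \<in> carrier_mat n n \<Longrightarrow> i < n \<Longrightarrow> j < n \<Longrightarrow>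
  (op_conj T F S $$ (i,j)) h = (\<Sum>k<n. \<Sum>l<n. (T $$ (i,k) * S $$ (l,j)) *\<^sub>C (F $$ (k,l)) h)"
  by (simp add: op_conj_def)

lemma op_conj_sum:
  assumes A1: "A1 \<in> carrier_mat n1 n1" and B1: "B1 \<in> carrier_mat n1 n1"
    and A2: "A2 \<in> carrier_mat n2 n2" and B2: "B2 \<in> carrier_mat n2 n2"
    and F1: "F1 \<in> carrier_mat n1 n1" and F2: "F2 \<in> carrier_mat n2 n2"
  shows "op_conj (diag_sum A1 A2) (op_sum F1 F2) (diag_sum B1 B2) = op_sum (op_conj A1 F1 B1) (op_conj A2 F2 B2)"
proof (rule eq_matI)
  have DA: "diag_sum A1 A2 \<in> carrier_mat (n1+n2) (n1+n2)" using A1 A2 by (rule diag_sum_carrier)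
  have DB: "diag_sum B1 B2 \<in> carrier_mat (n1+n2) (n1+n2)" using B1 B2 by (rule diag_sum_carrier)
  show "dim_row (op_conj (diag_sum A1 A2) (op_sum F1 F2) (diag_sum B1 B2)) = dim_row (op_sum (op_conj A1 F1 B1) (op_conj A2 F2 B2))"
    using DA A1 A2 by simp
  show "dim_col (op_conj (diag_sum A1 A2) (op_sum F1 F2) (diag_sum B1 B2)) = dim_col (op_sum (op_conj A1 F1 B1) (op_conj A2 F2 B2))"
    using DB B1 B2 by simp
  fix i j assume "i < dim_row (op_sum (op_conj A1 F1 B1) (op_conj A2 F2 B2))" "j < dim_col (op_sum (op_conj A1 F1 B1) (op_conj A2 F2 B2))"
  hence i: "i < n1 + n2" and j: "j < n1 + n2" using A1 A2 B1 B2 by auto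
  show "op_conj (diag_sum A1 A2) (op_sum F1 F2) (diag_sum B1 B2) $$ (i, j) = op_sum (op_conj A1 F1 B1) (op_conj A2 F2 B2) $$ (i, j)"
  proof (rule ext)
    fix h
    have "(op_conj (diag_sum A1 A2) (op_sum F1 F2) (diag_sum B1 B2) $$ (i, j)) h
      = (\<Sum>k<n1+n2. \<Sum>l<n1+n2. (diag_sum A1 A2 $$ (i,k) * diag_sum B1 B2 $$ (l,j)) *\<^sub>C (op_sum F1 F2 $$ (k,l)) h)"
      using DA DB i j by (simp add: op_conj_index)
    also have "\<dots> = (\<Sum>k<n1+n2. \<Sum>l<n1+n2. (blk n1 (\<lambda>i k. A1 $$ (i,k)) (\<lambda>i k. A2 $$ (i,k)) 0 i k
         * blk n1 (\<lambda>i k. B1 $$ (i,k)) (\<lambda>i k. B2 $$ (i,k)) 0 l j)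
         *\<^sub>C blk n1 (\<lambda>i k. (F1 $$ (i,k)) h) (\<lambda>i k. (F2 $$ (i,k)) h) 0 k l)"
    proof (rule sum.cong[OF refl], rule sum.cong[OF refl])
      fix k l assume k: "k \<in> {..<n1+n2}" and l: "l \<in> {..<n1+n2}"
      show "(diag_sum A1 A2 $$ (i,k) * diag_sum B1 B2 $$ (l,j)) *\<^sub>C (op_sum F1 F2 $$ (k,l)) h =
        (blk n1 (\<lambda>i k. A1 $$ (i,k)) (\<lambda>i k. A2 $$ (i,k)) 0 i k
         * blk n1 (\<lambda>i k. B1 $$ (i,k)) (\<lambda>i k. B2 $$ (i,k)) 0 l j)
         *\<^sub>C blk n1 (\<lambda>i k. (F1 $$ (i,k)) h) (\<lambda>i k. (F2 $$ (i,k)) h) 0 k l"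
        using k l by (simp only: lessThan_iff blk_diag[OF A1 A2 i] blk_diag[OF B1 B2 _ j] blk_op_sum[OF F1 F2])
    qed
    also have "\<dots> = blk n1 (\<lambda>i j. \<Sum>k<n1. \<Sum>l<n1. (A1 $$ (i,k) * B1 $$ (l,j)) *\<^sub>C (F1 $$ (k,l)) h)
        (\<lambda>i j. \<Sum>k<n2. \<Sum>l<n2. (A2 $$ (i,k) * B2 $$ (l,j)) *\<^sub>C (F2 $$ (k,l)) h) 0 i j"
      by (rule block_sum[where pa="\<lambda>i k. A1 $$ (i,k)" and qa="\<lambda>i k. A2 $$ (i,k)"
            and pb="\<lambda>i k. B1 $$ (i,k)" and qb="\<lambda>i k. B2 $$ (i,k)"
            and pf="\<lambda>i k. (F1 $$ (i,k)) h" and qf="\<lambda>i k. (F2 $$ (i,k)) h"])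
    also have "\<dots> = (op_sum (op_conj A1 F1 B1) (op_conj A2 F2 B2) $$ (i, j)) h"
    proof -
      have c1: "op_conj A1 F1 B1 \<in> carrier_mat n1 n1" by (rule op_conj_carrier[OF A1 B1])
      have c2: "op_conj A2 F2 B2 \<in> carrier_mat n2 n2" by (rule op_conj_carrier[OF A2 B2])
      note e1 = op_conj_entry[OF A1 B1, of _ _ F1 h]
      note e2 = op_conj_entry[OF A2 B2, of _ _ F2 h]
      have r: "(op_sum (op_conj A1 F1 B1) (op_conj A2 F2 B2) $$ (i, j)) h =
        blk n1 (\<lambda>i k. (op_conj A1 F1 B1 $$ (i,k)) h) (\<lambda>i k. (op_conj A2 F2 B2 $$ (i,k)) h) 0 i j"
        by (rule blk_op_sum[OF c1 c2 i j])
      show ?thesis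
      proof (cases "i < n1 \<and> j < n1")
        case True thus ?thesis unfolding r blk_def using e1[of i j] by simp
      next
        case NF: False
        show ?thesis
        proof (cases "n1 \<le> i \<and> n1 \<le> j")
          case True
          have "i - n1 < n2" "j - n1 < n2" using True i j by auto
          thus ?thesis unfolding r blk_def using e2[of "i - n1" "j - n1"] True NF by simp
        next
          case False
          have f1: "(i < n1 \<and> j < n1) = False" using NF by simp
          have f2: "(n1 \<le> i \<and> n1 \<le> j) = False" using False by simp
          show ?thesis by (simp only: r blk_def f1 f2 if_False)
        qed
      qed
    qed
    finally show "(op_conj (diag_sum A1 A2) (op_sum F1 F2) (diag_sum B1 B2) $$ (i, j)) h = (op_sum (op_conj A1 F1 B1) (op_conj A2 F2 B2) $$ (i, j)) h" .
  qed
qed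

lemma op_val_conj: assumes F: "op_val n F" and A: "A \<in> carrier_mat n n" and B: "B \<in> carrier_mat n n"
  shows "op_val n (op_conj A F B)"
  unfolding op_val_def
proof (intro conjI allI impI)
  show "op_conj A F B \<in> carrier_mat n n" by (rule op_conj_carrier[OF A B])
  fix i j assume i: "i < n" and j: "j < n"
  have "bdd_op (\<lambda>h. \<Sum>k<n. \<Sum>l<n. (A $$ (i,k) * B $$ (l,j)) *\<^sub>C (F $$ (k,l)) h)"
  proof (rule bdd_op_sum)
    fix k assume k: "k \<in> {..<n}"
    show "bdd_op (\<lambda>h. \<Sum>l<n. (A $$ (i,k) * B $$ (l,j)) *\<^sub>C (F $$ (k,l)) h)"
    proof (rule bdd_op_sum)
      fix l assume l: "l \<in> {..<n}"
      have "bdd_op (F $$ (k,l))" using F k l unfolding op_val_def by simp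
      thus "bdd_op (\<lambda>h. (A $$ (i,k) * B $$ (l,j)) *\<^sub>C (F $$ (k,l)) h)" by (rule bdd_op_scale)
    qed
  qed
  moreover have "op_conj A F B $$ (i,j) = (\<lambda>h. \<Sum>k<n. \<Sum>l<n. (A $$ (i,k) * B $$ (l,j)) *\<^sub>C (F $$ (k,l)) h)"
    by (rule ext, rule op_conj_entry[OF A B i j])
  ultimately show "bdd_op (op_conj A F B $$ (i, j))" by simp
qed




definition env0 :: "ncpt set \<Rightarrow> ncpt set" where
  "env0 D = {pt_conj Si x S | x S Si. x \<in> D \<and> inverse_pair (fst x) S Si}"

lemma inverse_pairD: "inverse_pair n S Si \<Longrightarrow> S \<in> carrier_mat n n \<and> Si \<in> carrier_mat n n \<and> S * Si = 1\<^sub>m n \<and> Si * S = 1\<^sub>m n"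
  by (simp add: inverse_pair_def)

lemma conj_compose:
  assumes x: "x \<in> ncpts d" and SS: "inverse_pair (fst x) S Si" and TT: "inverse_pair (fst x) T Ti"
  shows "pt_conj Ti (pt_conj Si x S) T = pt_conj (Ti * Si) x (S * T) \<and> inverse_pair (fst x) (S * T) (Ti * Si)"
  using pt_conj_assoc[OF x, of Ti Si S T] inverse_pair_comp[OF SS TT] inverse_pairD[OF SS] inverse_pairD[OF TT] by simp

lemma env0_sub: assumes "nc_set d D" shows "env0 D \<subseteq> ncpts d"
proof
  fix y assume "y \<in> env0 D"
  then obtain x S Si where y: "y = pt_conj Si x S" and x: "x \<in> D" and SS: "inverse_pair (fst x) S Si"
    unfolding env0_def by blast
  have "x \<in> ncpts d" using assms x unfolding nc_set_def by blast
  thus "y \<in> ncpts d" using y inverse_pairD[OF SS] by (simp add: pt_conj_ncpts)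
qed

lemma D_sub_env0: assumes "nc_set d D" shows "D \<subseteq> env0 D"
proof
  fix x assume x: "x \<in> D"
  have xn: "x \<in> ncpts d" using assms x unfolding nc_set_def by blast
  have "x = pt_conj (1\<^sub>m (fst x)) x (1\<^sub>m (fst x))" using pt_conj_one[OF xn] by simp
  thus "x \<in> env0 D" unfolding env0_def using x inverse_pair_one by blast
qed

lemma env0_sum: assumes D: "nc_set d D" and y1: "y1 \<in> env0 D" and y2: "y2 \<in> env0 D"
  obtains x1 S1 Si1 x2 S2 Si2 where "x1 \<in> D" "x2 \<in> D" "inverse_pair (fst x1) S1 Si1" "inverse_pair (fst x2) S2 Si2"
    "y1 = pt_conj Si1 x1 S1" "y2 = pt_conj Si2 x2 S2"
    "pt_sum y1 y2 = pt_conj (diag_sum Si1 Si2) (pt_sum x1 x2) (diag_sum S1 S2)"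
    "pt_sum x1 x2 \<in> D" "inverse_pair (fst (pt_sum x1 x2)) (diag_sum S1 S2) (diag_sum Si1 Si2)"
proof -
  obtain x1 S1 Si1 where e1: "y1 = pt_conj Si1 x1 S1" and x1: "x1 \<in> D" and SS1: "inverse_pair (fst x1) S1 Si1"
    using y1 unfolding env0_def by blast
  obtain x2 S2 Si2 where e2: "y2 = pt_conj Si2 x2 S2" and x2: "x2 \<in> D" and SS2: "inverse_pair (fst x2) S2 Si2"
    using y2 unfolding env0_def by blast
  have x1n: "x1 \<in> ncpts d" and x2n: "x2 \<in> ncpts d" using D x1 x2 unfolding nc_set_def by blast+
  have s: "pt_sum y1 y2 = pt_conj (diag_sum Si1 Si2) (pt_sum x1 x2) (diag_sum S1 S2)"
    unfolding e1 e2 using inverse_pairD[OF SS1] inverse_pairD[OF SS2] by (intro pt_sum_conj[OF x1n x2n]) auto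
  have "pt_sum x1 x2 \<in> D" using D x1 x2 unfolding nc_set_def by blast
  moreover have "inverse_pair (fst (pt_sum x1 x2)) (diag_sum S1 S2) (diag_sum Si1 Si2)"
    using inverse_pair_diag[OF SS1 SS2] by simp
  ultimately show ?thesis using that x1 x2 SS1 SS2 e1 e2 s by blast
qed

lemma env0_conj: assumes D: "nc_set d D" and y: "y \<in> env0 D" and TT: "inverse_pair (fst y) T Ti"
  shows "pt_conj Ti y T \<in> env0 D"
proof -
  obtain x S Si where e: "y = pt_conj Si x S" and x: "x \<in> D" and SS: "inverse_pair (fst x) S Si"
    using y unfolding env0_def by blast
  have xn: "x \<in> ncpts d" using D x unfolding nc_set_def by blast
  have "pt_conj Ti y T = pt_conj (Ti * Si) x (S * T) \<and> inverse_pair (fst x) (S * T) (Ti * Si)"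
    unfolding e by (rule conj_compose[OF xn SS]) (use TT e in simp)
  thus ?thesis unfolding env0_def using x by blast
qed

lemma env0_nc_set: assumes D: "nc_set d D" shows "nc_set d (env0 D)"
  unfolding nc_set_def
proof (intro conjI ballI allI impI)
  show "env0 D \<subseteq> ncpts d" by (rule env0_sub[OF D])
  fix y1 y2 assume y1: "y1 \<in> env0 D" and y2: "y2 \<in> env0 D"
  from env0_sum[OF D y1 y2] obtain x1 S1 Si1 x2 S2 Si2 where
    "pt_sum y1 y2 = pt_conj (diag_sum Si1 Si2) (pt_sum x1 x2) (diag_sum S1 S2)"
    "pt_sum x1 x2 \<in> D" "inverse_pair (fst (pt_sum x1 x2)) (diag_sum S1 S2) (diag_sum Si1 Si2)" by metis
  thus "pt_sum y1 y2 \<in> env0 D" unfolding env0_def by blast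
next
  fix y U assume y: "y \<in> env0 D" and U: "unitary (fst y) U"
  show "pt_conj (mat_adjoint U) y U \<in> env0 D"
    by (rule env0_conj[OF D y unitary_inverse_pair[OF U]])
qed

lemma env0_invariant: assumes D: "nc_set d D" shows "invariant (env0 D)"
  unfolding invariant_def using env0_conj[OF D] by blast

lemma envelope_eq: assumes D: "nc_set d D" shows "envelope d D = env0 D"
proof
  show "envelope d D \<subseteq> env0 D" unfolding envelope_def
    using env0_nc_set[OF D] env0_invariant[OF D] D_sub_env0[OF D] by blast
  show "env0 D \<subseteq> envelope d D" unfolding envelope_def
  proof (rule Inter_greatest)
    fix B assume "B \<in> {B. nc_set d B \<and> invariant B \<and> D \<subseteq> B}"
    hence B: "invariant B" "D \<subseteq> B" by auto
    show "env0 D \<subseteq> B"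
    proof
      fix y assume "y \<in> env0 D"
      then obtain x S Si where e: "y = pt_conj Si x S" and x: "x \<in> D" and SS: "inverse_pair (fst x) S Si"
        unfolding env0_def by blast
      show "y \<in> B" using B x SS e unfolding invariant_def by blast
    qed
  qed
qed


lemma nc_fun_conj: "nc_function d D f \<Longrightarrow> x \<in> D \<Longrightarrow> inverse_pair (fst x) S Si \<Longrightarrow> pt_conj Si x S \<in> D \<Longrightarrow>
   f (pt_conj Si x S) = op_conj Si (f x) S"
  unfolding nc_function_def by blast

lemma well_def:
  assumes D: "nc_set d D" and f: "nc_function d D f"
    and x: "x \<in> D" and x': "x' \<in> D" and SS: "inverse_pair (fst x) S Si" and TT: "inverse_pair (fst x') T Ti"
    and eq: "pt_conj Si x S = pt_conj Ti x' T"
  shows "op_conj Si (f x) S = op_conj Ti (f x') T"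
proof -
  have xn: "x \<in> ncpts d" and x'n: "x' \<in> ncpts d" using D x x' unfolding nc_set_def by blast+
  define n where "n = fst x"
  have n': "fst x' = n" using eq unfolding n_def by (metis pt_conj_fst)
  have SS': "inverse_pair n S Si" and TT': "inverse_pair n T Ti" using SS TT n' n_def by auto
  have Sc: "S \<in> carrier_mat n n" "Si \<in> carrier_mat n n" "S * Si = 1\<^sub>m n" "Si * S = 1\<^sub>m n" using inverse_pairD[OF SS'] by auto
  have Tc: "T \<in> carrier_mat n n" "Ti \<in> carrier_mat n n" "T * Ti = 1\<^sub>m n" "Ti * T = 1\<^sub>m n" using inverse_pairD[OF TT'] by auto
  have "x' = pt_conj (1\<^sub>m n) x' (1\<^sub>m n)" using pt_conj_one[OF x'n] n' by simp
  also have "\<dots> = pt_conj T (pt_conj Ti x' T) Ti" using pt_conj_assoc[OF x'n, of T Ti T Ti] n' Tc by simp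
  also have "\<dots> = pt_conj T (pt_conj Si x S) Ti" using eq by simp
  also have "\<dots> = pt_conj (T * Si) x (S * Ti)" using pt_conj_assoc[OF xn, of T Si S Ti] n_def Tc Sc by simp
  finally have x'eq: "x' = pt_conj (T * Si) x (S * Ti)" .
  have P: "inverse_pair n (S * Ti) (T * Si)" by (rule inverse_pair_comp[OF SS' inverse_pair_sym[OF TT']])
  have fx': "f x' = op_conj (T * Si) (f x) (S * Ti)"
    using nc_fun_conj[OF f x, of "S * Ti" "T * Si"] P x'eq x' n_def by simp
  have "op_conj Ti (f x') T = op_conj (Ti * (T * Si)) (f x) (S * Ti * T)"
    unfolding fx' by (rule op_conj_assoc[OF Tc(2) mult_carrier_mat[OF Tc(1) Sc(2)] mult_carrier_mat[OF Sc(1) Tc(2)] Tc(1)])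
  also have "Ti * (T * Si) = Si" using Tc Sc by (metis assoc_mult_mat left_mult_one_mat)
  also have "S * Ti * T = S" using Tc Sc by (metis assoc_mult_mat right_mult_one_mat)
  finally show ?thesis by simp
qed

theorem proposition3p11:
  fixes d :: nat and D :: "ncpt set"
    and f :: "ncpt \<Rightarrow> ('h::chilbert \<Rightarrow> 'k::chilbert) mat"
  assumes "nc_domain d D"
    and "nc_function d D f"
  shows "\<exists>g. nc_function d (envelope d D) g \<and> (\<forall>x\<in>D. g x = f x)
           \<and> (\<forall>g'. nc_function d (envelope d D) g' \<and> (\<forall>x\<in>D. g' x = f x)
                  \<longrightarrow> (\<forall>x\<in>envelope d D. g' x = g x))"
proof -
  have D: "nc_set d D" using assms(1) unfolding nc_domain_def by blast
  note f = assms(2)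
  have env: "envelope d D = env0 D" by (rule envelope_eq[OF D])
  define g where "g y = (SOME F. \<exists>x S Si. x \<in> D \<and> inverse_pair (fst x) S Si \<and> y = pt_conj Si x S \<and> F = op_conj Si (f x) S)" for y
  have gval: "g (pt_conj Si x S) = op_conj Si (f x) S" if x: "x \<in> D" and SS: "inverse_pair (fst x) S Si" for x S Si
  proof -
    let ?P = "\<lambda>F. \<exists>x' T Ti. x' \<in> D \<and> inverse_pair (fst x') T Ti \<and> pt_conj Si x S = pt_conj Ti x' T \<and> F = op_conj Ti (f x') T"
    have "?P (op_conj Si (f x) S)" using x SS by blast
    hence "?P (g (pt_conj Si x S))" unfolding g_def by (rule someI)
    then obtain x' T Ti where "x' \<in> D" "inverse_pair (fst x') T Ti" "pt_conj Si x S = pt_conj Ti x' T"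
      and "g (pt_conj Si x S) = op_conj Ti (f x') T" by blast
    thus ?thesis using well_def[OF D f x _ SS] by metis
  qed
  have xn: "x \<in> ncpts d" if "x \<in> D" for x using D that unfolding nc_set_def by blast
  have fval: "op_val (fst x) (f x)" if "x \<in> D" for x using f that unfolding nc_function_def by blast
  have gf: "g x = f x" if x: "x \<in> D" for x
  proof -
    have e: "pt_conj (1\<^sub>m (fst x)) x (1\<^sub>m (fst x)) = x" by (rule pt_conj_one[OF xn[OF x]])
    have "g x = op_conj (1\<^sub>m (fst x)) (f x) (1\<^sub>m (fst x))" using gval[OF x inverse_pair_one] e by simp
    also have "\<dots> = f x" using nc_fun_conj[OF f x inverse_pair_one] e x by simp
    finally show ?thesis .
  qed
  have gnc: "nc_function d (env0 D) g"
    unfolding nc_function_def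
  proof (intro conjI ballI allI impI)
    fix y assume y: "y \<in> env0 D"
    then obtain x S Si where e: "y = pt_conj Si x S" and x: "x \<in> D" and SS: "inverse_pair (fst x) S Si"
      unfolding env0_def by blast
    show "op_val (fst y) (g y)" using gval[OF x SS] e op_val_conj[OF fval[OF x]] inverse_pairD[OF SS] by simp
  next
    fix y1 y2 assume y1: "y1 \<in> env0 D" and y2: "y2 \<in> env0 D" and "pt_sum y1 y2 \<in> env0 D"
    from env0_sum[OF D y1 y2] obtain x1 S1 Si1 x2 S2 Si2 where
      x1: "x1 \<in> D" and x2: "x2 \<in> D" and SS1: "inverse_pair (fst x1) S1 Si1" and SS2: "inverse_pair (fst x2) S2 Si2"
      and e1: "y1 = pt_conj Si1 x1 S1" and e2: "y2 = pt_conj Si2 x2 S2"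
      and s: "pt_sum y1 y2 = pt_conj (diag_sum Si1 Si2) (pt_sum x1 x2) (diag_sum S1 S2)"
      and xs: "pt_sum x1 x2 \<in> D" and SSs: "inverse_pair (fst (pt_sum x1 x2)) (diag_sum S1 S2) (diag_sum Si1 Si2)"
      by metis
    have fs: "f (pt_sum x1 x2) = op_sum (f x1) (f x2)" using f x1 x2 xs unfolding nc_function_def by blast
    have F1: "f x1 \<in> carrier_mat (fst x1) (fst x1)" using fval[OF x1] unfolding op_val_def by blast
    have F2: "f x2 \<in> carrier_mat (fst x2) (fst x2)" using fval[OF x2] unfolding op_val_def by blast
    have "g (pt_sum y1 y2) = op_conj (diag_sum Si1 Si2) (op_sum (f x1) (f x2)) (diag_sum S1 S2)"
      unfolding s gval[OF xs SSs] fs ..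
    also have "\<dots> = op_sum (op_conj Si1 (f x1) S1) (op_conj Si2 (f x2) S2)"
      using inverse_pairD[OF SS1] inverse_pairD[OF SS2] F1 F2 by (intro op_conj_sum) auto
    also have "\<dots> = op_sum (g y1) (g y2)" using gval[OF x1 SS1] gval[OF x2 SS2] e1 e2 by simp
    finally show "g (pt_sum y1 y2) = op_sum (g y1) (g y2)" .
  next
    fix y T Ti assume y: "y \<in> env0 D" and h: "inverse_pair (fst y) T Ti \<and> pt_conj Ti y T \<in> env0 D"
    then obtain x S Si where e: "y = pt_conj Si x S" and x: "x \<in> D" and SS: "inverse_pair (fst x) S Si"
      unfolding env0_def by blast
    have TT: "inverse_pair (fst x) T Ti" using h e by simp
    have cc: "pt_conj Ti y T = pt_conj (Ti * Si) x (S * T) \<and> inverse_pair (fst x) (S * T) (Ti * Si)"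
      unfolding e by (rule conj_compose[OF xn[OF x] SS TT])
    have "g (pt_conj Ti y T) = op_conj (Ti * Si) (f x) (S * T)" using cc gval[OF x] by simp
    also have "\<dots> = op_conj Ti (op_conj Si (f x) S) T"
      using inverse_pairD[OF SS] inverse_pairD[OF TT] by (intro op_conj_assoc[symmetric]) auto
    also have "\<dots> = op_conj Ti (g y) T" using gval[OF x SS] e by simp
    finally show "g (pt_conj Ti y T) = op_conj Ti (g y) T" .
  qed
  have uniq: "g' y = g y" if g': "nc_function d (env0 D) g'" and agree: "\<forall>x\<in>D. g' x = f x" and y: "y \<in> env0 D" for g' y
  proof -
    obtain x S Si where e: "y = pt_conj Si x S" and x: "x \<in> D" and SS: "inverse_pair (fst x) S Si"
      using y unfolding env0_def by blast
    have xe: "x \<in> env0 D" using D_sub_env0[OF D] x by blast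
    have "g' y = op_conj Si (g' x) S" using nc_fun_conj[OF g' xe SS] y e by simp
    also have "\<dots> = op_conj Si (f x) S" using agree x by simp
    also have "\<dots> = g y" using gval[OF x SS] e by simp
    finally show ?thesis .
  qed
  show ?thesis unfolding env using gnc gf uniq by blast
qed


end
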